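(* Let $N\ge 1$, let $\mathbf{W}^0$ be a real $N\times N$ matrix (the adjacency matrix), let $a,w\in\mathbb{R}$ and $S_x>0$, and assume the spectral radius of $a w\mathbf{W}^0$ is less than $1$. Define the (zero-frequency) cross-spectrum matrix $$\mathbf{S}_y=S_x\,(\mathbf{I}-a w\mathbf{W}^0)^{-1}(\mathbf{I}-a w(\mathbf{W}^0)^T)^{-1},$$ and set $g=N a w$. Let $\kappa_n$ ($n\ge1$) and $\kappa_{n,m}$ ($n,m\ge1$) be the motif cumulants of $\mathbf{W}^0$ defined below, and assume $\sum_{n\ge1}|g|^n|\kappa_n|<1$ and $\sum_{n,m\ge1}|g|^{n+m}|\kappa_{n,m}|<\infty$. Then $$\frac{\langle \mathbf{S}_y\rangle}{S_x}=\frac{1}{N}\Big(1-\sum_{n=1}^\infty g^n\kappa_n\Big)^{-2}\Big(1+\sum_{n,m=1}^\infty g^{n+m}\kappa_{n,m}\Big).$$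
   Context: This models a network of $N$ linearly interacting stochastic units $y_i=x_i+A*\sum_j \mathbf{W}_{ij}y_j$ with $\mathbf{W}=w\mathbf{W}^0$, identical independent baseline processes $x_i$ of auto-spectrum $S_x$, and $a=\tilde A(0)$ the (real) zero-frequency value of the Fourier transform of the linear response kernel; $\mathbf{S}_y$ above is then the matrix of total covariances. Notation: for an $N\times N$ matrix $\mathbf{X}$, $\langle\mathbf{X}\rangle=\frac1{N^2}\sum_{i,j}\mathbf{X}_{ij}$ (empirical average of the entries). Motif moments: for integers $n,m\ge0$, $\mu_{n,m}=\langle(\mathbf{W}^0)^n((\mathbf{W}^0)^T)^m\rangle/N^{n+m-1}$, and $\mu_n:=\mu_{n,0}$ (so $\mu_{0,0}=1$). A composition of a positive integer $n$ is an ordered tuple $(n_1,\dots,n_t)$ of positive integers with $n_1+\dots+n_t=n$; $\mathcal{C}(n)$ denotes the set of compositions of $n$. Motif cumulants: the numbers $\kappa_n$ ($n\ge1$) and $\kappa_{n,m}$ ($n,m\ge1$) are defined recursively (uniquely) by requiring, for all $n,m\ge1$, $$\mu_n=\sum_{(n_1,\dots,n_t)\in\mathcal{C}(n)}\prod_{i=1}^t\kappa_{n_i},\qquad \mu_{n,m}=\sum_{\substack{(n_1,\dots,n_t)\in\mathcal{C}(n)\\(m_1,\dots,m_s)\in\mathcal{C}(m)}}\Big(\prod_{i=2}^t\kappa_{n_i}\Big)\big(\kappa_{n_1,m_1}+\kappa_{n_1}\kappa_{m_1}\big)\Big(\prod_{j=2}^s\kappa_{m_j}\Big),$$ where an empty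 product equals $1$. *)

theory Defs
  imports "HOL-Analysis.Analysis" "Jordan_Normal_Form.Spectral_Radius"
    "Jordan_Normal_Form.Gauss_Jordan_Elimination"
begin

definition mavg :: "real mat \<Rightarrow> real" where
  "mavg X = (1 / (real (dim_row X))^2) *
     (\<Sum>i<dim_row X. \<Sum>j<dim_col X. X $$ (i, j))"

(* matrix inverse (the matrices used below are invertible) *)
definition minv :: "real mat \<Rightarrow> real mat" where
  "minv A = the (mat_inverse A)"

definition motif_moment :: "real mat \<Rightarrow> nat \<Rightarrow> nat \<Rightarrow> real" where
  "motif_moment W0 n m =
     mavg ((W0 ^\<^sub>m n) * ((transpose_mat W0) ^\<^sub>m m))
       / (real (dim_row W0)) powi (int n + int m - 1)"

definition compositions :: "nat \<Rightarrow> nat list set" where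
  "compositions n = {c. (\<forall>k\<in>set c. 0 < k) \<and> sum_list c = n}"

definition is_motif_cumulants ::
  "real mat \<Rightarrow> (nat \<Rightarrow> real) \<Rightarrow> (nat \<Rightarrow> nat \<Rightarrow> real) \<Rightarrow> bool" where
  "is_motif_cumulants W0 \<kappa> \<kappa>2 \<longleftrightarrow>
     (\<forall>n\<ge>1. motif_moment W0 n 0 =
        (\<Sum>c\<in>compositions n. prod_list (map \<kappa> c))) \<and>
     (\<forall>n\<ge>1. \<forall>m\<ge>1. motif_moment W0 n m =
        (\<Sum>c\<in>compositions n. \<Sum>d\<in>compositions m.
           prod_list (map \<kappa> (tl c)) *
           (\<kappa>2 (hd c) (hd d) + \<kappa> (hd c) * \<kappa> (hd d)) *
           prod_list (map \<kappa> (tl d))))"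

end

theory Submission
  imports Defs
begin


lemma smult_smult_mat: "a \<cdot>\<^sub>m (b \<cdot>\<^sub>m A) = (a * b :: 'a :: semigroup_mult) \<cdot>\<^sub>m A"
  by (intro eq_matI) (auto simp: mult.assoc)

lemma smult_pow_mat:
  assumes "A \<in> carrier_mat n n"
  shows "(c \<cdot>\<^sub>m A) ^\<^sub>m k = (c ^ k) \<cdot>\<^sub>m (A ^\<^sub>m k :: 'a :: comm_semiring_1 mat)"
proof (induction k)
  case 0
  then show ?case using assms by (auto intro!: eq_matI)
next
  case (Suc k)
  have "(c \<cdot>\<^sub>m A) ^\<^sub>m Suc k = ((c ^ k) \<cdot>\<^sub>m (A ^\<^sub>m k)) * (c \<cdot>\<^sub>m A)" using Suc by simp
  also have "\<dots> = (c ^ Suc k) \<cdot>\<^sub>m (A ^\<^sub>m Suc k)"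
    using assms by (simp add: mult_smult_distrib[of _ n n _ n] mult_smult_assoc_mat[of _ n n _ n] smult_smult_mat mult.commute)
  finally show ?case .
qed

lemma smult_mat_mult_vec_eq:
  assumes "A \<in> carrier_mat n n" "v \<in> carrier_vec n"
  shows "(c \<cdot>\<^sub>m A) *\<^sub>v v = c \<cdot>\<^sub>v (A *\<^sub>v (v :: 'a :: comm_ring_1 vec))"
  using assms by (intro eq_vecI) (auto simp: scalar_prod_def sum_distrib_left mult.assoc)

lemma spectral_radius_nonneg:
  assumes "A \<in> carrier_mat n n" "n > 0"
  shows "spectral_radius A \<ge> 0"
  using spectral_radius_mem_max(1)[OF assms] by auto

lemma pow_decay:
  fixes A :: "real mat"
  assumes A: "A \<in> carrier_mat n n" and n: "n > 0"
    and sr: "spectral_radius (map_mat complex_of_real A) < 1"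
  shows "\<exists>C r. 0 < r \<and> r < 1 \<and> (\<forall>k i j. i < n \<longrightarrow> j < n \<longrightarrow> \<bar>(A ^\<^sub>m k) $$ (i,j)\<bar> \<le> C * r ^ k)"
proof -
  define Ac where "Ac = map_mat complex_of_real A"
  have Ac: "Ac \<in> carrier_mat n n" using A by (simp add: Ac_def)
  define s where "s = spectral_radius Ac"
  have s0: "s \<ge> 0" unfolding s_def by (rule spectral_radius_nonneg[OF Ac n])
  have s1: "s < 1" using sr by (simp add: s_def Ac_def)
  define r where "r = (s + 1) / 2"
  have r0: "r > 0" and r1: "r < 1" and sr': "s < r" using s0 s1 by (auto simp: r_def)
  define Ac' where "Ac' = complex_of_real (1 / r) \<cdot>\<^sub>m Ac"
  have Ac': "Ac' \<in> carrier_mat n n" using Ac by (simp add: Ac'_def)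
  have "spectral_radius Ac' < 1"
  proof -
    obtain ev where ev: "ev \<in> spectrum Ac'" and eq: "spectral_radius Ac' = norm ev"
      using spectral_radius_mem_max(1)[OF Ac' n] by auto
    from ev obtain v where v: "v \<in> carrier_vec n" "v \<noteq> 0\<^sub>v n" "Ac' *\<^sub>v v = ev \<cdot>\<^sub>v v"
      using Ac' unfolding spectrum_def eigenvalue_def eigenvector_def by auto
    have "Ac *\<^sub>v v = (complex_of_real r * ev) \<cdot>\<^sub>v v"
    proof -
      have "Ac = complex_of_real r \<cdot>\<^sub>m Ac'" using r0 Ac
        by (intro eq_matI) (auto simp: Ac'_def)
      then have "Ac *\<^sub>v v = complex_of_real r \<cdot>\<^sub>v (Ac' *\<^sub>v v)"
        using smult_mat_mult_vec_eq[OF Ac' v(1)] by simp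
      also have "\<dots> = (complex_of_real r * ev) \<cdot>\<^sub>v v" using v(3) by (simp add: smult_smult_assoc)
      finally show ?thesis .
    qed
    then have "complex_of_real r * ev \<in> spectrum Ac"
      using v Ac unfolding spectrum_def eigenvalue_def eigenvector_def by auto
    then have "norm (complex_of_real r * ev) \<le> s"
      unfolding s_def by (intro spectral_radius_mem_max(2)[OF Ac n]) auto
    then have "r * norm ev \<le> s" using r0 by (simp add: norm_mult)
    then have "r * norm ev < r * 1" using sr' by simp
    then have "norm ev < 1" using r0 by (simp only: mult_less_cancel_left_pos)
    then show ?thesis using eq by simp
  qed
  moreover obtain as where "char_poly Ac' = (\<Prod>a\<leftarrow>as. [:- a, 1:])"
    using char_poly_factorized[OF Ac'] by auto
  ultimately obtain c where c: "\<And>k. norm_bound (Ac' ^\<^sub>m k) c"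
    using spectral_radius_jnf_norm_bound_less_1[OF Ac'] jordan_nf_exists[OF Ac'] by blast
  have "\<bar>(A ^\<^sub>m k) $$ (i,j)\<bar> \<le> c * (1 / (1/r)) ^ k" if ij: "i < n" "j < n" for k i j
  proof -
    have e1: "Ac' ^\<^sub>m k = complex_of_real ((1/r) ^ k) \<cdot>\<^sub>m (Ac ^\<^sub>m k)"
      unfolding Ac'_def using smult_pow_mat[OF Ac] by simp
    have e2: "Ac ^\<^sub>m k = map_mat complex_of_real (A ^\<^sub>m k)"
      unfolding Ac_def by (rule of_real_hom.mat_hom_pow[OF A, symmetric])
    have "Ac' ^\<^sub>m k = complex_of_real ((1/r) ^ k) \<cdot>\<^sub>m map_mat complex_of_real (A ^\<^sub>m k)"
      using e1 e2 by simp
    then have "(Ac' ^\<^sub>m k) $$ (i,j) = complex_of_real ((1/r) ^ k * (A ^\<^sub>m k) $$ (i,j))"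
      using ij A by simp
    moreover have "norm ((Ac' ^\<^sub>m k) $$ (i,j)) \<le> c"
      using c[of k] ij Ac' unfolding norm_bound_def by auto
    ultimately have "\<bar>(1/r) ^ k * (A ^\<^sub>m k) $$ (i,j)\<bar> \<le> c" by (metis norm_of_real)
    then have "(1/r) ^ k * \<bar>(A ^\<^sub>m k) $$ (i,j)\<bar> \<le> c" using r0 by (simp add: abs_mult)
    then have "\<bar>(A ^\<^sub>m k) $$ (i,j)\<bar> \<le> c * r ^ k" using r0 by (simp add: field_simps)
    then show ?thesis by simp
  qed
  then show ?thesis using r0 r1 by (intro exI[of _ c] exI[of _ r]) simp
qed


lemma geom_bound_summable:
  fixes f :: "nat \<Rightarrow> real"
  assumes "\<And>k. \<bar>f k\<bar> \<le> C * r ^ k" "0 < r" "r < 1"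
  shows "summable (\<lambda>k. \<bar>f k\<bar>)"
proof (rule summable_comparison_test[of _ "\<lambda>k. C * r ^ k"])
  show "\<exists>N. \<forall>n\<ge>N. norm \<bar>f n\<bar> \<le> C * r ^ n" using assms by auto
  show "summable (\<lambda>k. C * r ^ k)" using assms by (intro summable_mult summable_geometric) auto
qed

lemma minv_eqI:
  fixes A S :: "real mat"
  assumes A: "A \<in> carrier_mat n n" and S: "S \<in> carrier_mat n n" and SA: "S * A = 1\<^sub>m n"
  shows "minv A = S"
proof -
  have AS: "A * S = 1\<^sub>m n" by (rule mat_mult_left_right_inverse[OF S A SA])
  have U: "A \<in> Units (ring_mat TYPE(real) n undefined)"
    using A S AS SA unfolding Units_def ring_mat_def by auto
  obtain B where B: "mat_inverse A = Some B"
    by (metis U mat_inverse(1)[OF A] option.exhaust)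
  from mat_inverse(2)[OF A B] have BA: "B * A = 1\<^sub>m n" and Bc: "B \<in> carrier_mat n n" by auto
  have "B = B * (A * S)" using Bc AS by simp
  also have "\<dots> = (B * A) * S" using Bc A S by (simp add: assoc_mult_mat)
  also have "\<dots> = S" using BA S by simp
  finally show ?thesis unfolding minv_def B by simp
qed

lemma neumann:
  fixes A :: "real mat"
  assumes A: "A \<in> carrier_mat n n"
    and bd: "\<And>k i j. i < n \<Longrightarrow> j < n \<Longrightarrow> \<bar>(A ^\<^sub>m k) $$ (i,j)\<bar> \<le> C * r ^ k"
    and r: "0 < r" "r < 1"
  shows "minv (1\<^sub>m n - A) = mat n n (\<lambda>(i,j). \<Sum>k. (A ^\<^sub>m k) $$ (i,j))"
proof -
  define S where "S = mat n n (\<lambda>(i,j). \<Sum>k. (A ^\<^sub>m k) $$ (i,j))"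
  have summ: "summable (\<lambda>k. (A ^\<^sub>m k) $$ (i,j))" if "i < n" "j < n" for i j
  proof (rule summable_norm_cancel)
    show "summable (\<lambda>k. norm ((A ^\<^sub>m k) $$ (i,j)))"
    using geom_bound_summable[of "\<lambda>k. (A ^\<^sub>m k) $$ (i,j)", OF bd[OF that] r] by simp
  qed
  have Sc: "S \<in> carrier_mat n n" by (simp add: S_def)
  have "S * (1\<^sub>m n - A) = 1\<^sub>m n"
  proof (rule eq_matI)
    fix i j assume i: "i < dim_row (1\<^sub>m n)" and j: "j < dim_col (1\<^sub>m n)"
    then have i: "i < n" and j: "j < n" by auto
    have "(S * (1\<^sub>m n - A)) $$ (i,j) = S $$ (i,j) - (S * A) $$ (i,j)"
      using A Sc i j by (simp add: mult_minus_distrib_mat[OF Sc one_carrier_mat A])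
    also have "(S * A) $$ (i,j) = (\<Sum>l<n. (\<Sum>k. (A ^\<^sub>m k) $$ (i,l)) * A $$ (l,j))"
      using A i j by (simp add: S_def scalar_prod_def lessThan_atLeast0)
    also have "\<dots> = (\<Sum>l<n. \<Sum>k. (A ^\<^sub>m k) $$ (i,l) * A $$ (l,j))"
      using i by (intro sum.cong refl) (simp add: suminf_mult2[symmetric] summ)
    also have "\<dots> = (\<Sum>k. \<Sum>l<n. (A ^\<^sub>m k) $$ (i,l) * A $$ (l,j))"
      by (intro suminf_sum[symmetric] summable_mult2 summ i) auto
    also have "\<dots> = (\<Sum>k. (A ^\<^sub>m Suc k) $$ (i,j))"
      using A i j by (simp add: scalar_prod_def lessThan_atLeast0)
    also have "\<dots> = (\<Sum>k. (A ^\<^sub>m k) $$ (i,j)) - (A ^\<^sub>m 0) $$ (i,j)"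
      by (rule suminf_split_head[OF summ[OF i j]])
    finally show "(S * (1\<^sub>m n - A)) $$ (i,j) = 1\<^sub>m n $$ (i,j)"
      using i j A by (simp add: S_def)
  qed (use A Sc in auto)
  then show ?thesis unfolding S_def[symmetric]
    by (intro minv_eqI[OF _ Sc]) (use A in auto)
qed



lemma compositions_0: "compositions 0 = {[]}"
  apply (auto simp: compositions_def)
  subgoal for x by (cases x) auto
  done

lemma length_le_sum_list_pos: "\<forall>k\<in>set c. (0::nat) < k \<Longrightarrow> length c \<le> sum_list c"
  by (induction c) auto

lemma finite_compositions: "finite (compositions n)"
proof (rule finite_subset)
  show "compositions n \<subseteq> {xs. set xs \<subseteq> {0..n} \<and> length xs \<le> n}"
    using length_le_sum_list_pos member_le_sum_list
    by (fastforce simp: compositions_def)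
  show "finite {xs. set xs \<subseteq> {0..n} \<and> length xs \<le> n}"
    by (rule finite_lists_length_le) auto
qed

lemma compositions_split:
  assumes n: "n \<ge> 1"
  shows "(\<Sum>c\<in>compositions n. F c) = (\<Sum>i\<in>{1..n}. \<Sum>c\<in>compositions (n - i). F (i # c))"
proof -
  have "(\<Sum>c\<in>compositions n. F c) = (\<Sum>(i,c)\<in>Sigma {1..n} (\<lambda>i. compositions (n - i)). F (i # c))"
  proof (rule sum.reindex_bij_witness[of _ "\<lambda>(i,c). i # c" "\<lambda>c. (hd c, tl c)"])
    fix c assume c: "c \<in> compositions n"
    then have "c \<noteq> []" using n by (auto simp: compositions_def)
    then obtain i c' where ic: "c = i # c'" by (cases c) auto
    show "(case (hd c, tl c) of (i, c) \<Rightarrow> i # c) = c" using ic by simp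
    have "i \<le> n" "0 < i" using c ic by (auto simp: compositions_def)
    then show "(hd c, tl c) \<in> Sigma {1..n} (\<lambda>i. compositions (n - i))"
      using c ic by (auto simp: compositions_def)
    show "(case (hd c, tl c) of (i, c) \<Rightarrow> F (i # c)) = F c" using ic by simp
  next
    fix p assume p: "p \<in> Sigma {1..n} (\<lambda>i. compositions (n - i))"
    then show "(hd (case p of (i, c) \<Rightarrow> i # c), tl (case p of (i, c) \<Rightarrow> i # c)) = p" by auto
    from p show "(case p of (i, c) \<Rightarrow> i # c) \<in> compositions n"
      by (auto simp: compositions_def)
  qed
  also have "\<dots> = (\<Sum>i\<in>{1..n}. \<Sum>c\<in>compositions (n - i). F (i # c))"
    by (rule sum.Sigma[symmetric]) (auto simp: finite_compositions)
  finally show ?thesis .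
qed

definition Pc :: "(nat \<Rightarrow> real) \<Rightarrow> nat \<Rightarrow> real" where
  "Pc \<kappa> n = (\<Sum>c\<in>compositions n. prod_list (map \<kappa> c))"

lemma Pc_0: "Pc \<kappa> 0 = 1"
  by (simp add: Pc_def compositions_0)

lemma Pc_rec: "n \<ge> 1 \<Longrightarrow> Pc \<kappa> n = (\<Sum>i\<in>{1..n}. \<kappa> i * Pc \<kappa> (n - i))"
  unfolding Pc_def by (subst compositions_split) (auto simp: sum_distrib_left)

lemma mu2_rec:
  assumes "n \<ge> 1" "m \<ge> 1"
  shows "(\<Sum>c\<in>compositions n. \<Sum>d\<in>compositions m.
           prod_list (map \<kappa> (tl c)) * H (hd c) (hd d) * prod_list (map \<kappa> (tl d)))
       = (\<Sum>i\<in>{1..n}. \<Sum>j\<in>{1..m}. Pc \<kappa> (n - i) * Pc \<kappa> (m - j) * H i j)"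
proof -
  have "(\<Sum>c\<in>compositions n. \<Sum>d\<in>compositions m.
           prod_list (map \<kappa> (tl c)) * H (hd c) (hd d) * prod_list (map \<kappa> (tl d)))
      = (\<Sum>i\<in>{1..n}. \<Sum>c\<in>compositions (n - i). \<Sum>j\<in>{1..m}. \<Sum>d\<in>compositions (m - j).
           prod_list (map \<kappa> c) * H i j * prod_list (map \<kappa> d))"
    using assms by (subst compositions_split, simp, subst compositions_split, simp_all)
  also have "\<dots> = (\<Sum>i\<in>{1..n}. \<Sum>j\<in>{1..m}. Pc \<kappa> (n - i) * Pc \<kappa> (m - j) * H i j)"
  proof (intro sum.cong refl)
    fix i assume "i \<in> {1..n}"
    have "(\<Sum>c\<in>compositions (n - i). \<Sum>j\<in>{1..m}. \<Sum>d\<in>compositions (m - j).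
           prod_list (map \<kappa> c) * H i j * prod_list (map \<kappa> d))
        = (\<Sum>c\<in>compositions (n - i). \<Sum>j\<in>{1..m}. prod_list (map \<kappa> c) * (H i j * Pc \<kappa> (m - j)))"
      by (simp add: Pc_def sum_distrib_left mult.assoc)
    also have "\<dots> = (\<Sum>j\<in>{1..m}. \<Sum>c\<in>compositions (n - i). prod_list (map \<kappa> c) * (H i j * Pc \<kappa> (m - j)))"
      by (rule sum.swap)
    also have "\<dots> = (\<Sum>j\<in>{1..m}. Pc \<kappa> (n - i) * Pc \<kappa> (m - j) * H i j)"
    proof (intro sum.cong refl)
      fix j
      have "(\<Sum>c\<in>compositions (n - i). prod_list (map \<kappa> c) * (H i j * Pc \<kappa> (m - j)))
          = (\<Sum>c\<in>compositions (n - i). prod_list (map \<kappa> c)) * (H i j * Pc \<kappa> (m - j))"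
        by (rule sum_distrib_right[symmetric])
      then show "(\<Sum>c\<in>compositions (n - i). prod_list (map \<kappa> c) * (H i j * Pc \<kappa> (m - j)))
          = Pc \<kappa> (n - i) * Pc \<kappa> (m - j) * H i j"
        by (simp add: Pc_def mult_ac)
    qed
    finally show "(\<Sum>c\<in>compositions (n - i). \<Sum>j\<in>{1..m}. \<Sum>d\<in>compositions (m - j).
           prod_list (map \<kappa> c) * H i j * prod_list (map \<kappa> d))
        = (\<Sum>j\<in>{1..m}. Pc \<kappa> (n - i) * Pc \<kappa> (m - j) * H i j)" .
  qed
  finally show ?thesis .
qed




lemma gen_fun:
  fixes p k :: "nat \<Rightarrow> real" and q f :: "nat \<Rightarrow> nat \<Rightarrow> real"
  assumes p_abs: "summable (\<lambda>n. \<bar>p n\<bar>)"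
    and k_abs: "summable (\<lambda>n. \<bar>k n\<bar>)"
    and q_abs: "\<And>i. summable (\<lambda>j. \<bar>q i j\<bar>)"
    and qq_abs: "summable (\<lambda>i. \<Sum>j. \<bar>q i j\<bar>)"
    and k0: "k 0 = 0" and p0: "p 0 = 1"
    and prec: "\<And>n. n \<ge> 1 \<Longrightarrow> p n = (\<Sum>i\<le>n. k i * p (n - i))"
    and f: "\<And>n m. f n m = p n * p m + (\<Sum>i\<le>n. p (n - i) * (\<Sum>j\<le>m. q i j * p (m - j)))"
    and Kne: "suminf k \<noteq> 1"
  shows "\<exists>R. (\<forall>n. f n sums R n) \<and>
           R sums ((1 / (1 - suminf k))\<^sup>2 * (1 + (\<Sum>i. \<Sum>j. q i j)))"
proof -
  define M where "M = suminf p"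
  define K where "K = suminf k"
  define Q where "Q i = (\<Sum>j. q i j)" for i
  have p_n: "summable (\<lambda>n. norm (p n))" using p_abs by simp
  have k_n: "summable (\<lambda>n. norm (k n))" using k_abs by simp
  have conv: "(\<lambda>n. \<Sum>i\<le>n. k i * p (n - i)) sums (K * M)"
    unfolding K_def M_def by (rule Cauchy_product_sums[OF k_n p_n])
  have "(\<lambda>n. (\<Sum>i\<le>n. k i * p (n - i)) + (if n = 0 then 1 else 0)) sums (K * M + 1)"
    by (intro sums_add conv) (use sums_single[of 0 "\<lambda>_. 1::real"] in simp)
  moreover have "(\<lambda>n. (\<Sum>i\<le>n. k i * p (n - i)) + (if n = 0 then 1 else 0)) = p"
  proof
    fix n show "(\<Sum>i\<le>n. k i * p (n - i)) + (if n = 0 then 1 else 0) = p n"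
      using prec[of n] k0 p0 by (cases "n = 0") auto
  qed
  ultimately have "p sums (K * M + 1)" by simp
  then have MK: "M = K * M + 1" unfolding M_def by (simp add: sums_iff)
  have K1: "1 - K \<noteq> 0" using Kne by (simp add: K_def)
  have M_eq: "M = 1 / (1 - K)"
    using MK K1 by (simp add: field_simps)
  have Qsum: "(\<lambda>m. \<Sum>j\<le>m. q i j * p (m - j)) sums (Q i * M)" for i
    unfolding Q_def M_def by (rule Cauchy_product_sums) (use q_abs[of i] p_n in simp_all)
  define R where "R n = p n * M + (\<Sum>i\<le>n. p (n - i) * (Q i * M))" for n
  have fs: "f n sums R n" for n
    unfolding f R_def
    by (intro sums_add sums_sum sums_mult Qsum) (simp add: M_def summable_norm_cancel[OF p_n] summable_sums)
  have Q_abs: "summable (\<lambda>i. norm (Q i))"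
  proof (rule summable_comparison_test[OF _ qq_abs])
    show "\<exists>N. \<forall>n\<ge>N. norm (norm (Q n)) \<le> (\<Sum>j. \<bar>q n j\<bar>)"
      unfolding Q_def using summable_rabs[OF q_abs] by auto
  qed
  have conv2: "(\<lambda>n. \<Sum>i\<le>n. Q i * p (n - i)) sums (suminf Q * M)"
    unfolding M_def by (rule Cauchy_product_sums[OF Q_abs p_n])
  have "(\<lambda>n. p n * M + (\<Sum>i\<le>n. Q i * p (n - i)) * M) sums (M * M + suminf Q * M * M)"
    by (intro sums_add sums_mult2 conv2) (simp add: M_def summable_norm_cancel[OF p_n] summable_sums)
  moreover have "(\<lambda>n. p n * M + (\<Sum>i\<le>n. Q i * p (n - i)) * M) = R"
    by (rule ext) (simp add: R_def sum_distrib_left sum_distrib_right mult_ac)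
  ultimately have "R sums (M * M + suminf Q * M * M)" by simp
  moreover have "M * M + suminf Q * M * M = (1 / (1 - K))\<^sup>2 * (1 + suminf Q)"
    unfolding M_eq by (simp add: power2_eq_square add_divide_distrib)
  ultimately show ?thesis using fs unfolding K_def Q_def by auto
qed




lemma pow_mat_comm:
  assumes "A \<in> carrier_mat n n"
  shows "A * A ^\<^sub>m k = A ^\<^sub>m k * (A :: 'a :: semiring_1 mat)"
proof (induction k)
  case 0 then show ?case using assms by simp
next
  case (Suc k)
  have "A * A ^\<^sub>m Suc k = (A * A ^\<^sub>m k) * A" using assms by (simp add: assoc_mult_mat[of _ n n _ n _ n])
  also have "\<dots> = A ^\<^sub>m Suc k * A" using Suc by simp
  finally show ?case .
qed

lemma transpose_pow_mat:
  fixes A :: "'a :: comm_semiring_1 mat"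
  assumes A: "A \<in> carrier_mat n n"
  shows "transpose_mat (A ^\<^sub>m k) = (transpose_mat A) ^\<^sub>m k"
proof (induction k)
  case 0 then show ?case using A by simp
next
  case (Suc k)
  have "transpose_mat (A ^\<^sub>m Suc k) = transpose_mat (A ^\<^sub>m k * A)"
    by (simp only: pow_mat.simps)
  also have "\<dots> = transpose_mat A * transpose_mat (A ^\<^sub>m k)"
    by (rule transpose_mult[OF pow_carrier_mat[OF A] A])
  also have "\<dots> = transpose_mat A * (transpose_mat A) ^\<^sub>m k" by (simp only: Suc.IH)
  also have "\<dots> = (transpose_mat A) ^\<^sub>m Suc k"
    using pow_mat_comm[of "transpose_mat A" n k] A by (simp only: pow_mat.simps transpose_carrier_mat)
  finally show ?case .
qed

lemma mavg_transpose:
  assumes "X \<in> carrier_mat n n"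
  shows "mavg (transpose_mat X) = mavg X"
proof -
  have "mavg (transpose_mat X) = 1 / (real n)\<^sup>2 * (\<Sum>i<n. \<Sum>j<n. X $$ (j,i))"
    using assms unfolding mavg_def by simp
  also have "(\<Sum>i<n. \<Sum>j<n. X $$ (j,i)) = (\<Sum>j<n. \<Sum>i<n. X $$ (j,i))"
    by (rule sum.swap)
  finally show ?thesis using assms unfolding mavg_def by simp
qed

lemma mavg_smult: "mavg (c \<cdot>\<^sub>m X) = c * mavg X"
  unfolding mavg_def by (simp add: sum_distrib_left mult_ac)

lemma mavg_one: "n \<ge> 1 \<Longrightarrow> mavg (1\<^sub>m n) = 1 / real n"
  unfolding mavg_def by (simp add: power2_eq_square)

lemma mavg_bound:
  assumes "X \<in> carrier_mat n n" "n \<ge> 1" "\<And>i j. i < n \<Longrightarrow> j < n \<Longrightarrow> \<bar>X $$ (i,j)\<bar> \<le> b"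
  shows "\<bar>mavg X\<bar> \<le> b"
proof -
  have "\<bar>\<Sum>i<n. \<Sum>j<n. X $$ (i,j)\<bar> \<le> (\<Sum>i<n. \<Sum>j<n. \<bar>X $$ (i,j)\<bar>)"
    by (rule order.trans[OF sum_abs]) (intro sum_mono sum_abs)
  also have "\<dots> \<le> (\<Sum>i<n. \<Sum>j<n. b)" by (intro sum_mono assms(3)) auto
  finally have "\<bar>\<Sum>i<n. \<Sum>j<n. X $$ (i,j)\<bar> \<le> real n ^ 2 * b" by (simp add: power2_eq_square)
  then show ?thesis using assms(1,2) unfolding mavg_def by (simp add: abs_mult field_simps)
qed

lemma mavg_prod_series:
  fixes B C :: "real mat"
  assumes B: "B \<in> carrier_mat n n" and C: "C \<in> carrier_mat n n"
    and sB: "\<And>i j. i < n \<Longrightarrow> j < n \<Longrightarrow> summable (\<lambda>k. (B ^\<^sub>m k) $$ (i,j))"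
    and sC: "\<And>i j. i < n \<Longrightarrow> j < n \<Longrightarrow> summable (\<lambda>k. (C ^\<^sub>m k) $$ (i,j))"
  shows "\<exists>R. (\<forall>a. (\<lambda>b. mavg (B ^\<^sub>m a * C ^\<^sub>m b)) sums R a) \<and>
          R sums mavg (mat n n (\<lambda>(i,j). \<Sum>k. (B ^\<^sub>m k) $$ (i,j)) * mat n n (\<lambda>(i,j). \<Sum>k. (C ^\<^sub>m k) $$ (i,j)))"
proof -
  define S2 where "S2 l j = (\<Sum>k. (C ^\<^sub>m k) $$ (l,j))" for l j
  define S1 where "S1 i l = (\<Sum>k. (B ^\<^sub>m k) $$ (i,l))" for i l
  define R where "R a = 1 / (real n)\<^sup>2 * (\<Sum>i<n. \<Sum>j<n. \<Sum>l<n. (B ^\<^sub>m a) $$ (i,l) * S2 l j)" for a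
  have eB: "(B ^\<^sub>m a * C ^\<^sub>m b) $$ (i,j) = (\<Sum>l<n. (B ^\<^sub>m a) $$ (i,l) * (C ^\<^sub>m b) $$ (l,j))"
    if "i < n" "j < n" for a b i j
    using that B C by (simp add: scalar_prod_def lessThan_atLeast0)
  have "(\<lambda>b. mavg (B ^\<^sub>m a * C ^\<^sub>m b)) sums R a" for a
  proof -
    have "(\<lambda>b. 1 / (real n)\<^sup>2 * (\<Sum>i<n. \<Sum>j<n. \<Sum>l<n. (B ^\<^sub>m a) $$ (i,l) * (C ^\<^sub>m b) $$ (l,j))) sums R a"
      unfolding R_def S2_def
      by (intro sums_mult sums_sum) (auto intro!: summable_sums sC)
    moreover have "(\<lambda>b. 1 / (real n)\<^sup>2 * (\<Sum>i<n. \<Sum>j<n. \<Sum>l<n. (B ^\<^sub>m a) $$ (i,l) * (C ^\<^sub>m b) $$ (l,j)))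
        = (\<lambda>b. mavg (B ^\<^sub>m a * C ^\<^sub>m b))"
    proof
      fix b
      have d: "dim_row (B ^\<^sub>m a * C ^\<^sub>m b) = n" "dim_col (B ^\<^sub>m a * C ^\<^sub>m b) = n"
        using B C by auto
      show "1 / (real n)\<^sup>2 * (\<Sum>i<n. \<Sum>j<n. \<Sum>l<n. (B ^\<^sub>m a) $$ (i,l) * (C ^\<^sub>m b) $$ (l,j))
          = mavg (B ^\<^sub>m a * C ^\<^sub>m b)"
        unfolding mavg_def d by (intro arg_cong2[where f="(*)"] refl sum.cong) (simp_all add: eB)
    qed
    ultimately show ?thesis by simp
  qed
  moreover have "R sums mavg (mat n n (\<lambda>(i,j). S1 i j) * mat n n (\<lambda>(i,j). S2 i j))"
  proof -
    have "R sums (1 / (real n)\<^sup>2 * (\<Sum>i<n. \<Sum>j<n. \<Sum>l<n. S1 i l * S2 l j))"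
      unfolding R_def S1_def
      by (intro sums_mult sums_sum sums_mult2) (auto intro!: summable_sums sB)
    moreover have "mavg (mat n n (\<lambda>(i,j). S1 i j) * mat n n (\<lambda>(i,j). S2 i j))
        = 1 / (real n)\<^sup>2 * (\<Sum>i<n. \<Sum>j<n. \<Sum>l<n. S1 i l * S2 l j)"
      unfolding mavg_def by (simp add: scalar_prod_def lessThan_atLeast0)
    ultimately show ?thesis by simp
  qed
  ultimately show ?thesis unfolding S1_def S2_def by blast
qed

lemma powi_ratio:
  assumes "x \<noteq> (0::real)"
  shows "x ^ (n + m) / x powi (int n + int m - 1) = x"
proof (cases "n + m = 0")
  case True
  then show ?thesis using assms by (simp add: power_int_minus divide_inverse)
next
  case False
  then have "int n + int m - 1 = int (n + m - 1)" by arith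
  then have "x powi (int n + int m - 1) = x ^ (n + m - 1)" by (metis power_int_of_nat)
  moreover have "x ^ (n + m) = x ^ (n + m - 1) * x" using False
    by (metis Suc_pred' neq0_conv power_Suc2)
  ultimately show ?thesis using assms by simp
qed




lemma infsum_nat_abs:
  fixes f :: "nat \<Rightarrow> real"
  assumes "summable (\<lambda>n. \<bar>f n\<bar>)"
  shows "infsum f UNIV = suminf f"
proof (rule infsumI[OF norm_summable_imp_has_sum])
  show "summable (\<lambda>n. norm (f n))" using assms by simp
  show "f sums suminf f" by (rule summable_sums, rule summable_norm_cancel) (use assms in simp)
qed

lemma summable_on_UNIV_abs:
  fixes f :: "nat \<Rightarrow> real"
  assumes "(\<lambda>n. \<bar>f n\<bar>) summable_on UNIV"
  shows "summable (\<lambda>n. \<bar>f n\<bar>)"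
  by (rule summable_on_UNIV_nonneg_real_iff[THEN iffD1, OF _ assms]) simp

lemma sum_atMost_from1:
  fixes f :: "nat \<Rightarrow> 'a :: comm_monoid_add"
  assumes "f 0 = 0"
  shows "(\<Sum>i\<le>n. f i) = (\<Sum>i\<in>{1..n}. f i)"
proof -
  have "(\<Sum>i\<le>n. f i) = (\<Sum>i\<in>{0..n}. f i)" by (simp add: atMost_atLeast0)
  also have "\<dots> = f 0 + (\<Sum>i\<in>{Suc 0..n}. f i)" by (rule sum.atLeast_Suc_atMost) simp
  finally show ?thesis using assms by simp
qed

lemma aux_alg: "((a::real) * b) ^ k * (x / p) = b ^ k * x * (a ^ k / p)"
  by (simp add: power_mult_distrib divide_inverse mult_ac)

lemma e_rel:
  fixes W0 :: "real mat"
  assumes W0: "W0 \<in> carrier_mat N N" and N: "N \<ge> 1"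
  shows "(real N * c) ^ (n + m) * motif_moment W0 n m
       = real N * mavg ((c \<cdot>\<^sub>m W0) ^\<^sub>m n * (c \<cdot>\<^sub>m transpose_mat W0) ^\<^sub>m m)"
proof -
  have WT: "transpose_mat W0 \<in> carrier_mat N N" using W0 by simp
  have "(c \<cdot>\<^sub>m W0) ^\<^sub>m n * (c \<cdot>\<^sub>m transpose_mat W0) ^\<^sub>m m
      = (c ^ n \<cdot>\<^sub>m W0 ^\<^sub>m n) * (c ^ m \<cdot>\<^sub>m transpose_mat W0 ^\<^sub>m m)"
    by (simp only: smult_pow_mat[OF W0] smult_pow_mat[OF WT])
  also have "\<dots> = c ^ n \<cdot>\<^sub>m (W0 ^\<^sub>m n * (c ^ m \<cdot>\<^sub>m transpose_mat W0 ^\<^sub>m m))"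
    by (rule mult_smult_assoc_mat[OF pow_carrier_mat[OF W0] smult_carrier_mat[OF pow_carrier_mat[OF WT]]])
  also have "\<dots> = c ^ n \<cdot>\<^sub>m (c ^ m \<cdot>\<^sub>m (W0 ^\<^sub>m n * transpose_mat W0 ^\<^sub>m m))"
    by (simp only: mult_smult_distrib[OF pow_carrier_mat[OF W0] pow_carrier_mat[OF WT]])
  also have "\<dots> = (c ^ n * c ^ m) \<cdot>\<^sub>m (W0 ^\<^sub>m n * transpose_mat W0 ^\<^sub>m m)"
    by (rule smult_smult_mat)
  finally have e: "mavg ((c \<cdot>\<^sub>m W0) ^\<^sub>m n * (c \<cdot>\<^sub>m transpose_mat W0) ^\<^sub>m m)
      = c ^ (n + m) * mavg (W0 ^\<^sub>m n * transpose_mat W0 ^\<^sub>m m)"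
    by (simp add: mavg_smult power_add)
  have dr: "dim_row W0 = N" using W0 by simp
  have Nz: "real N \<noteq> 0" using N by simp
  have "(real N * c) ^ (n + m) * motif_moment W0 n m
      = c ^ (n + m) * mavg (W0 ^\<^sub>m n * transpose_mat W0 ^\<^sub>m m)
        * (real N ^ (n + m) / real N powi (int n + int m - 1))"
    unfolding motif_moment_def dr by (rule aux_alg)
  also have "\<dots> = real N * mavg ((c \<cdot>\<^sub>m W0) ^\<^sub>m n * (c \<cdot>\<^sub>m transpose_mat W0) ^\<^sub>m m)"
    unfolding powi_ratio[OF Nz] e by simp
  finally show ?thesis .
qed

lemma mm_sym:
  fixes W0 :: "real mat"
  assumes W0: "W0 \<in> carrier_mat N N"
  shows "motif_moment W0 0 m = motif_moment W0 m 0"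
proof -
  have WT: "transpose_mat W0 \<in> carrier_mat N N" using W0 by simp
  have "mavg (W0 ^\<^sub>m 0 * transpose_mat W0 ^\<^sub>m m) = mavg (transpose_mat W0 ^\<^sub>m m)"
    using W0 WT by simp
  also have "\<dots> = mavg (transpose_mat (W0 ^\<^sub>m m))" by (simp add: transpose_pow_mat[OF W0])
  also have "\<dots> = mavg (W0 ^\<^sub>m m)" by (rule mavg_transpose[OF pow_carrier_mat[OF W0]])
  also have "\<dots> = mavg (W0 ^\<^sub>m m * transpose_mat W0 ^\<^sub>m 0)" using W0 WT by simp
  finally show ?thesis unfolding motif_moment_def by (simp add: add.commute)
qed




theorem theorem1:
  fixes N :: nat and W0 :: "real mat" and a w Sx :: real
    and \<kappa> :: "nat \<Rightarrow> real" and \<kappa>2 :: "nat \<Rightarrow> nat \<Rightarrow> real"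
  assumes N: "N \<ge> 1"
    and W0: "W0 \<in> carrier_mat N N"
    and Sx: "Sx > 0"
    and rho: "spectral_radius (map_mat complex_of_real ((a * w) \<cdot>\<^sub>m W0)) < 1"
    and cum: "is_motif_cumulants W0 \<kappa> \<kappa>2"
    and sum1: "(\<lambda>n. \<bar>real N * a * w\<bar> ^ n * \<bar>\<kappa> n\<bar>) summable_on {1..}"
    and sum1_lt: "(\<Sum>\<^sub>\<infinity>n\<in>{1..}. \<bar>real N * a * w\<bar> ^ n * \<bar>\<kappa> n\<bar>) < 1"
    and sum2: "(\<lambda>(n, m). \<bar>real N * a * w\<bar> ^ (n + m) * \<bar>\<kappa>2 n m\<bar>)
                 summable_on ({1..} \<times> {1..})"
  shows "let g = real N * a * w;
             Sy = Sx \<cdot>\<^sub>m (minv (1\<^sub>m N - (a * w) \<cdot>\<^sub>m W0)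
                    * minv (1\<^sub>m N - (a * w) \<cdot>\<^sub>m transpose_mat W0))
         in mavg Sy / Sx =
            (1 / real N) * (1 - (\<Sum>\<^sub>\<infinity>n\<in>{1..}. g ^ n * \<kappa> n)) powi (-2)
              * (1 + (\<Sum>\<^sub>\<infinity>(n, m)\<in>{1..} \<times> {1..}. g ^ (n + m) * \<kappa>2 n m))"
proof -
  define g where "g = real N * a * w"
  define B where "B = (a * w) \<cdot>\<^sub>m W0"
  define C where "C = (a * w) \<cdot>\<^sub>m transpose_mat W0"
  have Bc: "B \<in> carrier_mat N N" using W0 by (simp add: B_def)
  have Cc: "C \<in> carrier_mat N N" using W0 by (simp add: C_def)
  have CB: "C = transpose_mat B" unfolding B_def C_def using W0 by (intro eq_matI) auto
  have CBk: "C ^\<^sub>m k = transpose_mat (B ^\<^sub>m k)" for k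
    unfolding CB by (rule transpose_pow_mat[OF Bc, symmetric])
  have N0: "N > 0" using N by simp
  obtain C0 r where r: "0 < r" "r < 1"
    and bdB: "\<And>k i j. i < N \<Longrightarrow> j < N \<Longrightarrow> \<bar>(B ^\<^sub>m k) $$ (i,j)\<bar> \<le> C0 * r ^ k"
    using pow_decay[OF Bc N0 rho[folded B_def]] by blast
  have bdC: "\<bar>(C ^\<^sub>m k) $$ (i,j)\<bar> \<le> C0 * r ^ k" if "i < N" "j < N" for k i j
    using bdB[OF that(2,1), of k] that Bc unfolding CBk by simp
  have sumB: "summable (\<lambda>k. (B ^\<^sub>m k) $$ (i,j))" if "i < N" "j < N" for i j
    by (rule summable_norm_cancel) (use geom_bound_summable[OF bdB[OF that] r] in simp)
  have sumC: "summable (\<lambda>k. (C ^\<^sub>m k) $$ (i,j))" if "i < N" "j < N" for i j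
    by (rule summable_norm_cancel) (use geom_bound_summable[OF bdC[OF that] r] in simp)
  define S1 where "S1 = mat N N (\<lambda>(i,j). \<Sum>k. (B ^\<^sub>m k) $$ (i,j))"
  define S2 where "S2 = mat N N (\<lambda>(i,j). \<Sum>k. (C ^\<^sub>m k) $$ (i,j))"
  have S1: "minv (1\<^sub>m N - B) = S1" unfolding S1_def by (rule neumann[OF Bc bdB r])
  have S2: "minv (1\<^sub>m N - C) = S2" unfolding S2_def by (rule neumann[OF Cc bdC r])
  obtain R where R1: "\<And>n. (\<lambda>m. mavg (B ^\<^sub>m n * C ^\<^sub>m m)) sums R n" and R2: "R sums mavg (S1 * S2)"
    using mavg_prod_series[OF Bc Cc sumB sumC] unfolding S1_def S2_def by blast
  define f where "f n m = g ^ (n + m) * motif_moment W0 n m" for n m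
  have fe: "f n m = real N * mavg (B ^\<^sub>m n * C ^\<^sub>m m)" for n m
    unfolding f_def g_def B_def C_def using e_rel[OF W0 N, of "a * w" n m] by (simp add: mult.assoc)
  define P where "P = Pc \<kappa>"
  define p where "p n = g ^ n * P n" for n
  define k where "k i = (if i = 0 then 0 else g ^ i * \<kappa> i)" for i
  define q where "q i j = (if i = 0 \<or> j = 0 then 0 else g ^ (i + j) * \<kappa>2 i j)" for i j
  have c1: "motif_moment W0 n 0 = P n" if "n \<ge> 1" for n
    using cum that unfolding is_motif_cumulants_def P_def Pc_def by blast
  have c2: "motif_moment W0 n m = (\<Sum>i\<in>{1..n}. \<Sum>j\<in>{1..m}. P (n - i) * P (m - j) * (\<kappa>2 i j + \<kappa> i * \<kappa> j))"
    if "n \<ge> 1" "m \<ge> 1" for n m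
  proof -
    have "motif_moment W0 n m = (\<Sum>c\<in>compositions n. \<Sum>d\<in>compositions m.
           prod_list (map \<kappa> (tl c)) * (\<lambda>i j. \<kappa>2 i j + \<kappa> i * \<kappa> j) (hd c) (hd d) * prod_list (map \<kappa> (tl d)))"
      using cum that unfolding is_motif_cumulants_def by simp
    also have "\<dots> = (\<Sum>i\<in>{1..n}. \<Sum>j\<in>{1..m}. P (n - i) * P (m - j) * (\<kappa>2 i j + \<kappa> i * \<kappa> j))"
      unfolding P_def by (rule mu2_rec[OF that])
    finally show ?thesis .
  qed
  have e00: "mavg (B ^\<^sub>m 0 * C ^\<^sub>m 0) = 1 / real N"
    using Bc Cc N by (simp add: mavg_one)
  have pf: "p n = f n 0" for n
  proof (cases "n = 0")
    case True
    then show ?thesis using fe[of 0 0] e00 N by (simp add: p_def P_def Pc_0)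
  next
    case False
    then show ?thesis using c1[of n] by (simp add: p_def f_def)
  qed
  have prec: "p n = (\<Sum>i\<le>n. k i * p (n - i))" if "n \<ge> 1" for n
  proof -
    have "p n = g ^ n * (\<Sum>i\<in>{1..n}. \<kappa> i * P (n - i))"
      unfolding p_def P_def using Pc_rec[OF that] by simp
    also have "\<dots> = (\<Sum>i\<in>{1..n}. k i * p (n - i))"
      unfolding sum_distrib_left
    proof (intro sum.cong refl)
      fix i assume i: "i \<in> {1..n}"
      then have "g ^ n = g ^ i * g ^ (n - i)" by (simp flip: power_add)
      then show "g ^ n * (\<kappa> i * P (n - i)) = k i * p (n - i)"
        using i by (simp add: k_def p_def mult_ac)
    qed
    also have "\<dots> = (\<Sum>i\<le>n. k i * p (n - i))"
      by (rule sum_atMost_from1[symmetric]) (simp add: k_def)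
    finally show ?thesis .
  qed
  define D where "D n m = (\<Sum>i\<le>n. p (n - i) * (\<Sum>j\<le>m. q i j * p (m - j)))" for n m
  have D0: "D 0 m = 0" for m by (simp add: D_def q_def)
  have D0': "D n 0 = 0" for n by (simp add: D_def q_def)
  have p0: "p 0 = 1" by (simp add: p_def P_def Pc_0)
  have Dalt: "D n m = (\<Sum>i\<in>{1..n}. \<Sum>j\<in>{1..m}. p (n - i) * (q i j * p (m - j)))" for n m
  proof -
    have "D n m = (\<Sum>i\<in>{1..n}. p (n - i) * (\<Sum>j\<le>m. q i j * p (m - j)))"
      unfolding D_def by (rule sum_atMost_from1) (simp add: q_def)
    also have "\<dots> = (\<Sum>i\<in>{1..n}. \<Sum>j\<in>{1..m}. p (n - i) * (q i j * p (m - j)))"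
    proof (intro sum.cong refl)
      fix i
      have "p (n - i) * (\<Sum>j\<le>m. q i j * p (m - j)) = (\<Sum>j\<le>m. p (n - i) * (q i j * p (m - j)))"
        by (rule sum_distrib_left)
      also have "\<dots> = (\<Sum>j\<in>{1..m}. p (n - i) * (q i j * p (m - j)))"
        by (rule sum_atMost_from1) (simp add: q_def)
      finally show "p (n - i) * (\<Sum>j\<le>m. q i j * p (m - j)) = (\<Sum>j\<in>{1..m}. p (n - i) * (q i j * p (m - j)))" .
    qed
    finally show ?thesis .
  qed
  have fdec: "f n m = p n * p m + D n m" for n m
  proof (cases "n = 0 \<or> m = 0")
    case True
    then show ?thesis
    proof
      assume n: "n = 0"
      have "f 0 m = f m 0" unfolding f_def using mm_sym[OF W0, of m] by simp
      then show ?thesis using n pf[of m] p0 D0 by simp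
    next
      assume m: "m = 0"
      then show ?thesis using pf[of n] p0 D0' by simp
    qed
  next
    case False
    then have n: "n \<ge> 1" and m: "m \<ge> 1" by auto
    have "f n m = (\<Sum>i\<in>{1..n}. \<Sum>j\<in>{1..m}. g ^ (n + m) * (P (n - i) * P (m - j) * (\<kappa>2 i j + \<kappa> i * \<kappa> j)))"
      unfolding f_def c2[OF n m] by (simp add: sum_distrib_left)
    also have "\<dots> = (\<Sum>i\<in>{1..n}. \<Sum>j\<in>{1..m}. p (n - i) * (q i j * p (m - j)) + (k i * p (n - i)) * (k j * p (m - j)))"
    proof (intro sum.cong refl)
      fix i j assume i: "i \<in> {1..n}" and j: "j \<in> {1..m}"
      then have "n + m = (n - i) + (m - j) + i + j" by auto
      then have gp: "g ^ (n + m) = g ^ (n - i) * g ^ (m - j) * g ^ i * g ^ j"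
        by (simp only: power_add)
      have "g ^ (i + j) = g ^ i * g ^ j" by (simp add: power_add)
      then show "g ^ (n + m) * (P (n - i) * P (m - j) * (\<kappa>2 i j + \<kappa> i * \<kappa> j))
          = p (n - i) * (q i j * p (m - j)) + (k i * p (n - i)) * (k j * p (m - j))"
        using i j unfolding gp by (simp add: p_def q_def k_def algebra_simps)
    qed
    also have "\<dots> = D n m + (\<Sum>i\<in>{1..n}. k i * p (n - i)) * (\<Sum>j\<in>{1..m}. k j * p (m - j))"
      by (simp add: sum.distrib Dalt sum_product)
    also have "(\<Sum>i\<in>{1..n}. k i * p (n - i)) = p n"
      using prec[OF n] sum_atMost_from1[of "\<lambda>i. k i * p (n - i)" n] by (simp add: k_def)
    also have "(\<Sum>j\<in>{1..m}. k j * p (m - j)) = p m"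
      using prec[OF m] sum_atMost_from1[of "\<lambda>i. k i * p (m - i)" m] by (simp add: k_def)
    finally show ?thesis by simp
  qed
  have p_abs: "summable (\<lambda>n. \<bar>p n\<bar>)"
  proof (rule geom_bound_summable[OF _ r])
    fix n
    have "\<bar>mavg (B ^\<^sub>m n * C ^\<^sub>m 0)\<bar> \<le> C0 * r ^ n"
      using Bc Cc N bdB by (intro mavg_bound[of _ N]) auto
    then show "\<bar>p n\<bar> \<le> (real N * C0) * r ^ n"
      unfolding pf fe using N by (simp add: abs_mult mult.assoc mult_left_mono)
  qed
  have k_abs_on: "(\<lambda>n. \<bar>k n\<bar>) summable_on UNIV"
    using sum1 by (subst summable_on_cong_neutral[where f="\<lambda>n. \<bar>k n\<bar>" and T="{1..}" and g="\<lambda>n. \<bar>g\<bar> ^ n * \<bar>\<kappa> n\<bar>"])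
      (auto simp: k_def g_def abs_mult power_abs)
  have k_abs: "summable (\<lambda>n. \<bar>k n\<bar>)" by (rule summable_on_UNIV_abs[OF k_abs_on])
  have sumk_abs: "(\<Sum>n. \<bar>k n\<bar>) < 1"
  proof -
    have "(\<Sum>n. \<bar>k n\<bar>) = (\<Sum>\<^sub>\<infinity>n\<in>UNIV. \<bar>k n\<bar>)"
      by (rule infsum_nat_abs[symmetric]) (use k_abs in simp)
    also have "\<dots> = (\<Sum>\<^sub>\<infinity>n\<in>{1..}. \<bar>g\<bar> ^ n * \<bar>\<kappa> n\<bar>)"
      by (rule infsum_cong_neutral) (auto simp: k_def abs_mult power_abs)
    finally show ?thesis using sum1_lt by (simp add: g_def)
  qed
  have Kne: "suminf k \<noteq> 1"
    using summable_rabs[OF k_abs] sumk_abs by auto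
  have q_abs_on: "(\<lambda>(i,j). \<bar>q i j\<bar>) summable_on UNIV \<times> UNIV"
    using sum2 by (subst summable_on_cong_neutral[where f="\<lambda>(i,j). \<bar>q i j\<bar>" and T="{1..} \<times> {1..}"
          and g="\<lambda>(n, m). \<bar>g\<bar> ^ (n + m) * \<bar>\<kappa>2 n m\<bar>"])
      (auto simp: q_def g_def abs_mult power_abs split: if_splits)
  have q_abs: "summable (\<lambda>j. \<bar>q i j\<bar>)" for i
    using summable_on_SigmaD1[OF q_abs_on, of i] by (intro summable_on_UNIV_abs) simp
  have qq_abs: "summable (\<lambda>i. \<Sum>j. \<bar>q i j\<bar>)"
  proof -
    have "(\<lambda>i. infsum (\<lambda>j. \<bar>q i j\<bar>) UNIV) summable_on UNIV"
      using summable_on_Sigma_banach[OF q_abs_on] by simp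
    moreover have "infsum (\<lambda>j. \<bar>q i j\<bar>) UNIV = (\<Sum>j. \<bar>q i j\<bar>)" for i
      by (rule infsum_nat_abs) (use q_abs[of i] in simp)
    ultimately have "(\<lambda>i. \<Sum>j. \<bar>q i j\<bar>) summable_on UNIV" by simp
    then show ?thesis using summable_on_UNIV_nonneg_real_iff[of "\<lambda>i. \<Sum>j. \<bar>q i j\<bar>"]
      by (simp add: suminf_nonneg q_abs)
  qed
  obtain R' where R'1: "\<And>n. f n sums R' n"
    and R'2: "R' sums ((1 / (1 - suminf k))\<^sup>2 * (1 + (\<Sum>i. \<Sum>j. q i j)))"
    using gen_fun[OF p_abs k_abs q_abs qq_abs _ p0 prec _ Kne, of f] fdec
    by (auto simp: k_def D_def)
  have fR: "R' n = real N * R n" for n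
  proof -
    have "(\<lambda>m. real N * mavg (B ^\<^sub>m n * C ^\<^sub>m m)) sums (real N * R n)"
      by (rule sums_mult[OF R1])
    then have "f n sums (real N * R n)" by (simp add: fe[abs_def])
    then show ?thesis using R'1[of n] sums_unique2 by blast
  qed
  define K where "K = suminf k"
  define Q where "Q = (\<Sum>i. \<Sum>j. q i j)"
  have "(\<lambda>n. real N * R n) sums (real N * mavg (S1 * S2))" by (rule sums_mult[OF R2])
  moreover have "(\<lambda>n. real N * R n) sums ((1 / (1 - K))\<^sup>2 * (1 + Q))"
  proof -
    have "R' = (\<lambda>n. real N * R n)" by (rule ext, rule fR)
    then show ?thesis using R'2 unfolding K_def Q_def by simp
  qed
  ultimately have eqN: "real N * mavg (S1 * S2) = (1 / (1 - K))\<^sup>2 * (1 + Q)"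
    using sums_unique2 by blast
  have "mavg (S1 * S2) = 1 / real N * (real N * mavg (S1 * S2))" using N by simp
  then have mS: "mavg (S1 * S2) = 1 / real N * (1 / (1 - K))\<^sup>2 * (1 + Q)"
    unfolding eqN by (simp only: mult.assoc)
  have Kc: "(\<Sum>\<^sub>\<infinity>n\<in>{1..}. g ^ n * \<kappa> n) = K"
  proof -
    have "(\<Sum>\<^sub>\<infinity>n\<in>{1..}. g ^ n * \<kappa> n) = (\<Sum>\<^sub>\<infinity>n\<in>UNIV. k n)"
      by (rule infsum_cong_neutral) (auto simp: k_def)
    also have "\<dots> = K" unfolding K_def by (rule infsum_nat_abs[OF k_abs])
    finally show ?thesis .
  qed
  have Qc: "(\<Sum>\<^sub>\<infinity>(n, m)\<in>{1..} \<times> {1..}. g ^ (n + m) * \<kappa>2 n m) = Q"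
  proof -
    have qs: "(\<lambda>(i,j). q i j) summable_on UNIV \<times> UNIV"
    proof (rule abs_summable_summable)
      show "(\<lambda>x. norm (case x of (i, j) \<Rightarrow> q i j)) summable_on UNIV \<times> UNIV"
        using q_abs_on by (simp add: case_prod_unfold)
    qed
    have "(\<Sum>\<^sub>\<infinity>(n, m)\<in>{1..} \<times> {1..}. g ^ (n + m) * \<kappa>2 n m) = (\<Sum>\<^sub>\<infinity>(i, j)\<in>UNIV \<times> UNIV. q i j)"
      by (rule infsum_cong_neutral) (auto simp: q_def split: if_splits)
    also have "\<dots> = (\<Sum>\<^sub>\<infinity>i\<in>UNIV. \<Sum>\<^sub>\<infinity>j\<in>UNIV. q i j)"
      by (rule infsum_Sigma'_banach[OF qs, symmetric])
    also have "\<dots> = (\<Sum>\<^sub>\<infinity>i\<in>UNIV. \<Sum>j. q i j)"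
      by (intro infsum_cong infsum_nat_abs q_abs)
    also have "\<dots> = Q" unfolding Q_def
    proof (rule infsum_nat_abs)
      show "summable (\<lambda>i. \<bar>\<Sum>j. q i j\<bar>)"
        by (rule summable_comparison_test[OF _ qq_abs]) (use summable_rabs[OF q_abs] in auto)
    qed
    finally show ?thesis .
  qed
  have pw: "(1 - K) powi (-2) = (1 / (1 - K))\<^sup>2"
    by (simp add: power_int_minus power_one_over inverse_eq_divide)
  have Sy: "mavg (Sx \<cdot>\<^sub>m (minv (1\<^sub>m N - B) * minv (1\<^sub>m N - C))) / Sx = mavg (S1 * S2)"
    using Sx by (simp add: S1 S2 mavg_smult)
  show ?thesis
    unfolding Let_def g_def[symmetric] B_def[symmetric] C_def[symmetric] Kc Qc pw Sy mS ..
qed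


end
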